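(* Let $m,K,R\ge 1$ and let $N$ be an even positive integer. Let $\mathbf{P}\in\mathbb{F}_2^{N\times N}$ satisfy $\mathbf{P}\mathbf{P}^T=\mathbf{I}_N$, let $a,b\in\mathbb{F}_{2^m}$ be nonzero with $a\neq b$, and set $c=\frac{a}{a^2+b^2}$, $d=\frac{b}{a^2+b^2}$. Let $\mathbf{H}\in\mathbb{F}_2^{R\times N}$ and $\mathbf{G}\in\mathbb{F}_{2^m}^{K\times N}$ satisfy $\mathbf{G}\mathbf{H}^T=\mathbf{0}_{K\times R}$. Define $\mathbf{G}_{pub}=\mathbf{G}\,(\mathbf{P}_{c,d})^T$ and $\widetilde{\mathbf{H}}=\mathbf{H}\,(\mathbf{P}_{a,b})^T$. Then every entry of $\widetilde{\mathbf{H}}$ lies in the $\mathbb{F}_2$-linear span $\langle a,b\rangle_{\mathbb{F}_2}$, and $$\mathbf{G}_{pub}\,\widetilde{\mathbf{H}}^T=\mathbf{0}_{K\times R}.$$ In particular, the $\mathbb{F}_{2^m}$-linear code generated by the rows of $\mathbf{G}_{pub}$ is contained in the code $\{\mathbf{x}\in\mathbb{F}_{2^m}^N:\widetilde{\mathbf{H}}\mathbf{x}^T=\mathbf{0}\}$.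
   Context: For a binary matrix $\mathbf{P}=(p_{i,j})$ and two nonzero distinct elements $a,b\in\mathbb{F}_{2^m}$, $\mathbf{P}_{a,b}=(\tilde p_{i,j})$ denotes the matrix of the same size with entries in $\mathbb{F}_{2^m}$ given by $\tilde p_{i,j}=a$ if $p_{i,j}=0$ and $\tilde p_{i,j}=b$ if $p_{i,j}=1$. $\langle x_1,\dots,x_k\rangle_{\mathbb{F}_2}$ denotes the $\mathbb{F}_2$-vector space spanned by $x_1,\dots,x_k$. *)

theory Defs
  imports "HOL-Library.Z2" "Jordan_Normal_Form.Matrix"
begin

definition subst_mat :: "'a \<Rightarrow> 'a \<Rightarrow> bit mat \<Rightarrow> 'a mat" where
  "subst_mat a b P = map_mat (\<lambda>p. if p = 0 then a else b) P"

definition embed_mat :: "bit mat \<Rightarrow> 'a::ring_1 mat" where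
  "embed_mat H = map_mat of_bit H"

definition F2_span2 :: "'a::ring_1 \<Rightarrow> 'a \<Rightarrow> 'a set" where
  "F2_span2 a b = {of_bit u * a + of_bit v * b | u v :: bit. True}"

end

theory Submission imports Defs "Jordan_Normal_Form.Determinant" begin

lemma inv_even:
  "finite S \<Longrightarrow> \<forall>x\<in>S. f x \<in> S \<and> f (f x) = x \<and> f x \<noteq> x \<Longrightarrow> even (card S)"
proof (induction "card S" arbitrary: S rule: less_induct)
  case less
  show ?case
  proof (cases "S = {}")
    case True then show ?thesis by simp
  next
    case False
    then obtain x where x: "x \<in> S" by blast
    define S' where "S' = S - {x, f x}"
    have fx: "f x \<in> S" "f x \<noteq> x" using less.prems x by auto
    have c: "card S' = card S - 2" unfolding S'_def using less.prems(1) x fx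
      by (simp add: card_Diff_subset)
    have cs: "card S \<ge> 2" using less.prems(1) x fx
    proof -
      have "card {x, f x} \<le> card S" using less.prems(1) x fx by (intro card_mono) auto
      then show ?thesis using fx by simp
    qed
    have "even (card S')"
    proof (rule less.hyps)
      show "card S' < card S" using c cs by simp
      show "finite S'" using less.prems(1) S'_def by simp
      show "\<forall>y\<in>S'. f y \<in> S' \<and> f (f y) = y \<and> f y \<noteq> y"
        using less.prems(2) x unfolding S'_def by (smt (verit) Diff_iff insertCI insertE singletonD)
    qed
    then show ?thesis using c cs by presburger
  qed
qed

lemma char2:
  assumes "card (UNIV :: 'a::{field,finite} set) = 2 ^ m" "m \<ge> 1"
  shows "(2::'a) = 0"
proof (rule ccontr)
  assume h: "(2::'a) \<noteq> 0"
  have "even (card (UNIV - {0::'a}))"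
  proof (rule inv_even[where f = uminus])
    show "finite (UNIV - {0::'a})" by simp
    show "\<forall>x\<in>UNIV - {0::'a}. - x \<in> UNIV - {0} \<and> - (- x) = x \<and> - x \<noteq> x"
    proof
      fix x :: 'a assume "x \<in> UNIV - {0}"
      then have x: "x \<noteq> 0" by simp
      have "- x \<noteq> x"
      proof
        assume "- x = x" then have "2 * x = 0" by (metis mult_2 neg_eq_iff_add_eq_0)
        then show False using h x by simp
      qed
      then show "- x \<in> UNIV - {0} \<and> - (- x) = x \<and> - x \<noteq> x" using x by simp
    qed
  qed
  moreover have "card (UNIV - {0::'a}) = 2 ^ m - 1" using assms(1) by (simp add: card_Diff_singleton)
  moreover have "even ((2::nat) ^ m)" using assms(2) by simp
  moreover have "(2::nat) ^ m \<ge> 1" by simp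
  ultimately show False by presburger
qed

lemma bit_cases': "(x::bit) = 0 \<or> x = 1" by (cases "x = 0") simp_all

lemma of_bit_add: assumes "(2::'a::ring_1) = 0" shows "(of_bit (x + y) :: 'a) = of_bit x + of_bit y"
proof -
  have h: "(1::'a) + 1 = 0" using assms by (simp add: one_add_one)
  show ?thesis using bit_cases'[of x] bit_cases'[of y] h by auto
qed

lemma of_bit_mult: "(of_bit (x * y) :: 'a::ring_1) = of_bit x * of_bit y"
  using bit_cases'[of x] bit_cases'[of y] by auto

lemma of_bit_sum: "(2::'a::ring_1) = 0 \<Longrightarrow> (of_bit (sum f A) :: 'a) = (\<Sum>k\<in>A. of_bit (f k))"
  by (induction A rule: infinite_finite_induct) (auto simp: of_bit_add)

lemma subst_entry: "(if p = 0 then x else y) = x + (y - x) * (of_bit p :: 'a::ring_1)"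
  using bit_cases'[of p] by auto

lemma PtP:
  fixes P :: "bit mat"
  assumes "P \<in> carrier_mat N N" "P * transpose_mat P = 1\<^sub>m N"
  shows "transpose_mat P * P = 1\<^sub>m N"
  by (rule mat_mult_left_right_inverse[OF assms(1) _ assms(2)]) (use assms(1) in auto)

lemma col_prod:
  fixes P :: "bit mat"
  assumes "(2::'a::ring_1) = 0" "P \<in> carrier_mat N N" "P * transpose_mat P = 1\<^sub>m N" "i < N" "j < N"
  shows "(\<Sum>k<N. (of_bit (P $$ (k,i)) :: 'a) * of_bit (P $$ (k,j))) = (if i = j then 1 else 0)"
proof -
  have "(\<Sum>k<N. (of_bit (P $$ (k,i)) :: 'a) * of_bit (P $$ (k,j)))
        = of_bit (\<Sum>k<N. P $$ (k,i) * P $$ (k,j))"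
    by (simp only: of_bit_sum[OF assms(1)] of_bit_mult)
  also have "(\<Sum>k<N. P $$ (k,i) * P $$ (k,j)) = (transpose_mat P * P) $$ (i,j)"
    using assms(2,4,5) by (simp add: scalar_prod_def lessThan_atLeast0)
  also have "\<dots> = (if i = j then 1 else 0)" using PtP[OF assms(2,3)] assms(4,5) by simp
  finally show ?thesis by simp
qed

lemma col_sum:
  fixes P :: "bit mat"
  assumes "(2::'a::ring_1) = 0" "P \<in> carrier_mat N N" "P * transpose_mat P = 1\<^sub>m N" "i < N"
  shows "(\<Sum>k<N. (of_bit (P $$ (k,i)) :: 'a)) = 1"
proof -
  have "(\<Sum>k<N. (of_bit (P $$ (k,i)) :: 'a)) = (\<Sum>k<N. (of_bit (P $$ (k,i)) :: 'a) * of_bit (P $$ (k,i)))"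
    by (rule sum.cong) (use bit_cases' in auto)
  then show ?thesis using col_prod[OF assms(1-4) assms(4)] by simp
qed

lemma coef:
  fixes a b :: "'a::field"
  assumes two: "(2::'a) = 0" and "a \<noteq> b"
  defines "c \<equiv> a / (a^2 + b^2)" and "d \<equiv> b / (a^2 + b^2)"
  shows "c * (b - a) + a * (d - c) = 0" "(d - c) * (b - a) = 1"
proof -
  have m: "\<And>x::'a. x + x = 0" proof - fix x :: 'a show "x + x = 0" using two mult_2[of x] by simp qed
  have neg: "\<And>x::'a. - x = x" using m by (simp add: minus_unique)
  have ba: "b - a = a + b" using neg[of a] by (simp only: diff_conv_add_uminus add.commute)
  have s: "a^2 + b^2 = (a + b)^2" unfolding power2_sum using m[of "a"] by (simp only: mult_2 mult_zero_left add_0_right)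
  have ab: "a + b \<noteq> 0" using assms(2) ba by (metis eq_iff_diff_eq_0)
  have s0: "a^2 + b^2 \<noteq> 0" using s ab by simp
  have dc: "d - c = (a + b) / (a^2+b^2)" unfolding c_def d_def by (simp only: diff_divide_distrib[symmetric] ba)
  show "(d - c) * (b - a) = 1" unfolding dc ba using s s0 ab by (simp add: power2_eq_square)
  have "c * (b - a) + a * (d - c) = (a*(a+b) + a*(a+b)) / (a^2+b^2)"
    proof -
    have 1: "c * (b - a) = a*(a+b)/(a^2+b^2)" unfolding ba c_def by simp
    have 2: "a * (d - c) = a*(a+b)/(a^2+b^2)" unfolding dc by simp
    show ?thesis unfolding 1 2 by (simp add: add_divide_distrib)
  qed
  then show "c * (b - a) + a * (d - c) = 0" using m by simp
qed

lemma sum_lin: "(\<Sum>k\<in>A. x + y * f k + z * g k + w * h k) = of_nat (card A) * x + y * sum f A + z * sum g A + (w::'a::comm_ring_1) * sum h A"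
  by (simp add: sum.distrib sum_distrib_left)

lemma key:
  fixes P :: "bit mat" and a b :: "'a::field"
  assumes two: "(2::'a) = 0" and "a \<noteq> b" and N: "even N"
    and P: "P \<in> carrier_mat N N" "P * transpose_mat P = 1\<^sub>m N"
  defines "c \<equiv> a / (a^2 + b^2)" and "d \<equiv> b / (a^2 + b^2)"
  shows "transpose_mat (subst_mat c d P) * subst_mat a b P = 1\<^sub>m N"
proof (rule eq_matI)
  let ?q = "\<lambda>k i. (of_bit (P $$ (k,i)) :: 'a)"
  have nz: "(of_nat N :: 'a) = 0"
  proof -
    obtain t where "N = 2 * t" using N by blast
    then show ?thesis using two by simp
  qed
  show "dim_row (transpose_mat (subst_mat c d P) * subst_mat a b P) = dim_row (1\<^sub>m N)"
    "dim_col (transpose_mat (subst_mat c d P) * subst_mat a b P) = dim_col (1\<^sub>m N)"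
    using P by (auto simp: subst_mat_def)
  fix i j assume ij: "i < dim_row (1\<^sub>m N)" "j < dim_col (1\<^sub>m N)"
  then have i: "i < N" and j: "j < N" by auto
  have "(transpose_mat (subst_mat c d P) * subst_mat a b P) $$ (i, j)
      = (\<Sum>k<N. (if P $$ (k,i) = 0 then c else d) * (if P $$ (k,j) = 0 then a else b))"
    using P i j by (simp add: subst_mat_def scalar_prod_def lessThan_atLeast0)
  also have "\<dots> = (\<Sum>k<N. c*a + (c*(b-a)) * ?q k j + (a*(d-c)) * ?q k i + ((d-c)*(b-a)) * (?q k i * ?q k j))"
    by (rule sum.cong) (simp_all only: subst_entry, simp add: algebra_simps)
  also have "\<dots> = of_nat N * (c*a) + (c*(b-a)) * (\<Sum>k<N. ?q k j) + (a*(d-c)) * (\<Sum>k<N. ?q k i)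
       + ((d-c)*(b-a)) * (\<Sum>k<N. ?q k i * ?q k j)"
    by (rule trans[OF sum_lin]) simp
  also have "\<dots> = (c*(b-a) + a*(d-c)) + ((d-c)*(b-a)) * (if i = j then 1 else 0)"
    using col_sum[OF two P i] col_sum[OF two P j] col_prod[OF two P i j] nz by (simp add: algebra_simps)
  also have "\<dots> = 1\<^sub>m N $$ (i, j)"
    using coef[OF two assms(2)] i j unfolding c_def d_def by simp
  finally show "(transpose_mat (subst_mat c d P) * subst_mat a b P) $$ (i, j) = 1\<^sub>m N $$ (i, j)" .
qed

theorem mainTheorem2:
  fixes m K R N :: nat
    and P :: "bit mat" and H :: "bit mat"
    and G :: "'a::{field,finite} mat"
    and a b :: "'a"
  assumes "card (UNIV :: 'a set) = 2 ^ m"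
    and "m \<ge> 1" and "K \<ge> 1" and "R \<ge> 1"
    and "N > 0" and "even N"
    and "P \<in> carrier_mat N N" and "P * transpose_mat P = 1\<^sub>m N"
    and "a \<noteq> 0" and "b \<noteq> 0" and "a \<noteq> b"
    and "H \<in> carrier_mat R N" and "G \<in> carrier_mat K N"
    and "G * transpose_mat (embed_mat H) = 0\<^sub>m K R"
  shows "(let c = a / (a^2 + b^2); d = b / (a^2 + b^2);
              Gpub = G * transpose_mat (subst_mat c d P);
              Ht = embed_mat H * transpose_mat (subst_mat a b P)
          in (\<forall>i < R. \<forall>j < N. Ht $$ (i, j) \<in> F2_span2 a b)
             \<and> Gpub * transpose_mat Ht = 0\<^sub>m K R
             \<and> {transpose_mat Gpub *\<^sub>v u | u. u \<in> carrier_vec K}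
                 \<subseteq> {x \<in> carrier_vec N. Ht *\<^sub>v x = 0\<^sub>v R})"
proof -
  have two: "(2::'a) = 0" using char2 assms(1,2) by blast
  define c where "c = a / (a^2 + b^2)"
  define d where "d = b / (a^2 + b^2)"
  define Pcd where "Pcd = subst_mat c d P"
  define Pab where "Pab = subst_mat a b P"
  define E where "E = (embed_mat H :: 'a mat)"
  define Gpub where "Gpub = G * transpose_mat Pcd"
  define Ht where "Ht = E * transpose_mat Pab"
  have cP: "Pcd \<in> carrier_mat N N" "Pab \<in> carrier_mat N N" "E \<in> carrier_mat R N"
    using assms(7,12) by (auto simp: Pcd_def Pab_def E_def subst_mat_def embed_mat_def)
  have G: "G \<in> carrier_mat K N" by fact
  have K: "transpose_mat Pcd * Pab = 1\<^sub>m N"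
    unfolding Pcd_def Pab_def c_def d_def by (rule key[OF two assms(11,6,7,8)])
  have cG: "Gpub \<in> carrier_mat K N" "Ht \<in> carrier_mat R N"
    using cP G by (auto simp: Gpub_def Ht_def)
  have span: "\<forall>i < R. \<forall>j < N. Ht $$ (i, j) \<in> F2_span2 a b"
  proof (intro allI impI)
    fix i j assume i: "i < R" and j: "j < N"
    let ?u = "\<Sum>k<N. H $$ (i,k)"
    let ?v = "\<Sum>k<N. H $$ (i,k) * P $$ (j,k)"
    have "Ht $$ (i, j) = (\<Sum>k<N. of_bit (H $$ (i,k)) * (if P $$ (j,k) = 0 then a else b))"
      using i j assms(7,12) by (simp add: Ht_def E_def Pab_def embed_mat_def subst_mat_def scalar_prod_def lessThan_atLeast0)
    also have "\<dots> = (\<Sum>k<N. a * of_bit (H $$ (i,k)) + (b - a) * (of_bit (H $$ (i,k)) * of_bit (P $$ (j,k))))"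
      by (rule sum.cong) (simp_all only: subst_entry, simp add: algebra_simps)
    also have "\<dots> = a * of_bit ?u + (b - a) * of_bit ?v"
      by (simp only: sum.distrib sum_distrib_left[symmetric] of_bit_sum[OF two] of_bit_mult)
    also have "\<dots> = of_bit (?u + ?v) * a + of_bit ?v * b"
    proof -
      have m: "\<And>x::'a. x + x = 0" proof - fix x :: 'a show "x + x = 0" using two mult_2[of x] by simp qed
      have neg: "- a = a" using m by (simp add: minus_unique)
      have ba: "b - a = a + b" using neg by (simp only: diff_conv_add_uminus add.commute)
      show ?thesis unfolding of_bit_add[OF two] ba by (simp add: algebra_simps)
    qed
    finally show "Ht $$ (i, j) \<in> F2_span2 a b" unfolding F2_span2_def by blast
  qed
  have tH: "transpose_mat Ht = Pab * transpose_mat E"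
    unfolding Ht_def using cP by (simp add: transpose_mult)
  have orth: "Gpub * transpose_mat Ht = 0\<^sub>m K R"
  proof -
    have "Gpub * transpose_mat Ht = G * (transpose_mat Pcd * Pab) * transpose_mat E"
    proof -
      have "G * transpose_mat Pcd * (Pab * transpose_mat E) = G * (transpose_mat Pcd * (Pab * transpose_mat E))"
        using cP G by (intro assoc_mult_mat) auto
      also have "transpose_mat Pcd * (Pab * transpose_mat E) = (transpose_mat Pcd * Pab) * transpose_mat E"
        using cP by (intro assoc_mult_mat[symmetric]) auto
      also have "G * ((transpose_mat Pcd * Pab) * transpose_mat E) = G * (transpose_mat Pcd * Pab) * transpose_mat E"
        using cP G by (intro assoc_mult_mat[symmetric]) auto
      finally show ?thesis unfolding tH Gpub_def .
    qed
    also have "\<dots> = G * transpose_mat E" unfolding K using G by simp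
    finally show ?thesis using assms(14) E_def by simp
  qed
  have sub: "{transpose_mat Gpub *\<^sub>v u | u. u \<in> carrier_vec K}
                 \<subseteq> {x \<in> carrier_vec N. Ht *\<^sub>v x = 0\<^sub>v R}"
  proof clarify
    fix u :: "'a vec" assume u: "u \<in> carrier_vec K"
    have "Ht *\<^sub>v (transpose_mat Gpub *\<^sub>v u) = (Ht * transpose_mat Gpub) *\<^sub>v u"
      using cG u by (simp add: assoc_mult_mat_vec)
    also have "Ht * transpose_mat Gpub = transpose_mat (Gpub * transpose_mat Ht)"
      using cG by (simp add: transpose_mult)
    also have "\<dots> = 0\<^sub>m R K" unfolding orth by simp
    finally show "transpose_mat Gpub *\<^sub>v u \<in> carrier_vec N \<and> Ht *\<^sub>v (transpose_mat Gpub *\<^sub>v u) = 0\<^sub>v R"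
      using cG u by auto
  qed
  show ?thesis using span orth sub
    unfolding Let_def Gpub_def Ht_def Pcd_def Pab_def E_def c_def d_def by simp
qed

end
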